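(* Let $q$ be a prime power with $q\equiv 1\pmod 3$ and $q\geq 7$. If $q$ is odd, then $M(q-1,q-3)\geq (q^2-1)/2$. If $q$ is even, then $M(q-1,q-3)\geq (q-1)(q+2)/3$.
   Context: For permutations $\pi,\sigma$ of a finite set, $hd(\pi,\sigma)$ is the number of points at which they differ. $M(n,d)$ denotes the maximum number of permutations in a set $A$ of permutations of an $n$-element set such that $hd(\pi,\sigma)\geq d$ for all distinct $\pi,\sigma\in A$. *)

theory Defs
  imports "HOL-Combinatorics.Permutations" "HOL-Number_Theory.Prime_Powers" Complex_Main
begin

definition hd :: "('a \<Rightarrow> 'a) \<Rightarrow> ('a \<Rightarrow> 'a) \<Rightarrow> nat" where
  "hd \<pi> \<sigma> = card {x. \<pi> x \<noteq> \<sigma> x}"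

definition M :: "nat \<Rightarrow> nat \<Rightarrow> nat" where
  "M n d = Max {card A | A. A \<subseteq> {\<pi>. \<pi> permutes {..<n}} \<and>
                 (\<forall>\<pi>\<in>A. \<forall>\<sigma>\<in>A. \<pi> \<noteq> \<sigma> \<longrightarrow> hd \<pi> \<sigma> \<ge> d)}"

end

theory Submission
  imports Defs "HOL-Algebra.Algebraic_Closure" "HOL-Number_Theory.Residues"
    "HOL-Computational_Algebra.Primes"
begin

lemma (in cring) binomial_ring:
  assumes x: "x \<in> carrier R" and y: "y \<in> carrier R"
  shows "(x \<oplus> y) [^] n = (\<Oplus>k\<in>{..n}. ([(n choose k)] \<cdot> (x [^] k \<otimes> y [^] (n - k))))"
proof (induction n)
  case 0
  show ?case using x y by simp
next
  case (Suc n)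
  define f where "f = (\<lambda>k. x [^] k \<otimes> y [^] (Suc n - k))"
  have fc: "f k \<in> carrier R" for k using x y by (simp add: f_def)
  have B: "(\<Oplus>k\<in>{..n}. ([(n choose k)] \<cdot> (x [^] k \<otimes> y [^] (n - k)))) \<in> carrier R"
    using x y by (intro finsum_closed) auto
  have "(x \<oplus> y) [^] Suc n = (x \<oplus> y) [^] n \<otimes> (x \<oplus> y)" by simp
  also have "\<dots> = x \<otimes> (\<Oplus>k\<in>{..n}. ([(n choose k)] \<cdot> (x [^] k \<otimes> y [^] (n - k))))
                 \<oplus> y \<otimes> (\<Oplus>k\<in>{..n}. ([(n choose k)] \<cdot> (x [^] k \<otimes> y [^] (n - k))))"
    unfolding Suc using x y B by (subst m_comm) (auto simp: l_distr)
  also have "x \<otimes> (\<Oplus>k\<in>{..n}. ([(n choose k)] \<cdot> (x [^] k \<otimes> y [^] (n - k))))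
      = (\<Oplus>k\<in>{..n}. [(n choose k)] \<cdot> f (Suc k))"
  proof -
    have "x \<otimes> (\<Oplus>k\<in>{..n}. ([(n choose k)] \<cdot> (x [^] k \<otimes> y [^] (n - k))))
        = (\<Oplus>k\<in>{..n}. x \<otimes> (([(n choose k)] \<cdot> (x [^] k \<otimes> y [^] (n - k)))))"
      using x y by (intro finsum_rdistr) auto
    also have "\<dots> = (\<Oplus>k\<in>{..n}. [(n choose k)] \<cdot> f (Suc k))"
    proof (intro finsum_cong')
      fix k assume "k \<in> {..n}"
      then show "x \<otimes> (([(n choose k)] \<cdot> (x [^] k \<otimes> y [^] (n - k)))) = [(n choose k)] \<cdot> f (Suc k)"
        using x y by (simp add: add_pow_rdistr f_def m_assoc[symmetric] nat_pow_Suc2 Suc_diff_le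
              del: nat_pow_Suc) (simp add: m_comm)
    qed (use fc in auto)
    finally show ?thesis .
  qed
  also have "y \<otimes> (\<Oplus>k\<in>{..n}. ([(n choose k)] \<cdot> (x [^] k \<otimes> y [^] (n - k))))
      = (\<Oplus>k\<in>{..n}. [(n choose k)] \<cdot> f k)"
  proof -
    have "y \<otimes> (\<Oplus>k\<in>{..n}. ([(n choose k)] \<cdot> (x [^] k \<otimes> y [^] (n - k))))
        = (\<Oplus>k\<in>{..n}. y \<otimes> (([(n choose k)] \<cdot> (x [^] k \<otimes> y [^] (n - k)))))"
      using x y by (intro finsum_rdistr) auto
    also have "\<dots> = (\<Oplus>k\<in>{..n}. [(n choose k)] \<cdot> f k)"
    proof (intro finsum_cong')
      fix k assume "k \<in> {..n}"
      then have "Suc n - k = Suc (n - k)" by simp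
      then show "y \<otimes> (([(n choose k)] \<cdot> (x [^] k \<otimes> y [^] (n - k)))) = [(n choose k)] \<cdot> f k"
        using x y by (simp add: add_pow_rdistr f_def m_lcomm m_comm)
    qed (use fc in auto)
    finally show ?thesis .
  qed
  also have "(\<Oplus>k\<in>{..n}. [(n choose k)] \<cdot> f (Suc k)) = 
     (\<Oplus>k\<in>{..Suc n}. [(if k = 0 then 0 else (n choose (k - 1)))] \<cdot> f k)"
    by (subst finsum_Suc2) (use fc in auto)
  also have "(\<Oplus>k\<in>{..n}. [(n choose k)] \<cdot> f k) = (\<Oplus>k\<in>{..Suc n}. [(n choose k)] \<cdot> f k)"
    by (subst finsum_Suc) (use fc in \<open>auto simp: binomial_eq_0\<close>)
  also have "(\<Oplus>k\<in>{..Suc n}. [(if k = 0 then 0 else (n choose (k - 1)))] \<cdot> f k)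
      \<oplus> (\<Oplus>k\<in>{..Suc n}. [(n choose k)] \<cdot> f k)
      = (\<Oplus>k\<in>{..Suc n}. [(if k = 0 then 0 else (n choose (k - 1)))] \<cdot> f k \<oplus> [(n choose k)] \<cdot> f k)"
    by (rule finsum_addf[symmetric]) (use fc in auto)
  also have "\<dots> = (\<Oplus>k\<in>{..Suc n}. [(Suc n choose k)] \<cdot> f k)"
  proof (intro finsum_cong')
    fix k
    show "[(if k = 0 then 0 else (n choose (k - 1)))] \<cdot> f k \<oplus> [(n choose k)] \<cdot> f k = [(Suc n choose k)] \<cdot> f k"
      using fc[of k] by (cases k) (simp_all add: add.nat_pow_mult)
  qed (use fc in auto)
  finally show ?case by (simp add: f_def)
qed


lemma (in cring) char_mult_zero:
  fixes p :: nat
  assumes "[p] \<cdot> \<one> = \<zero>" "z \<in> carrier R"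
  shows "[(p * m :: nat)] \<cdot> z = \<zero>"
proof -
  have "[p] \<cdot> z = \<zero>" using add_pow_ldistr[of \<one> z p] assms by simp
  then have "[m] \<cdot> ([p] \<cdot> z) = \<zero>" by simp
  then show ?thesis using assms by (simp add: add.nat_pow_pow mult.commute)
qed

lemma (in cring) frobenius:
  fixes p :: nat
  assumes p: "Factorial_Ring.prime p" and ch: "[p] \<cdot> \<one> = \<zero>" and x: "x \<in> carrier R" and y: "y \<in> carrier R"
  shows "(x \<oplus> y) [^] p = x [^] p \<oplus> y [^] p"
proof -
  define g where "g = (\<lambda>k. [(p choose k)] \<cdot> (x [^] k \<otimes> y [^] (p - k)))"
  have gc: "g k \<in> carrier R" for k using x y by (simp add: g_def)
  have p0: "p > 0" using p prime_gt_0_nat by blast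
  have "(x \<oplus> y) [^] p = (\<Oplus>k\<in>{..p}. g k)" unfolding g_def by (rule binomial_ring[OF x y])
  also have "{..p} = insert 0 (insert p {1..<p})" using p0 by auto
  also have "(\<Oplus>k\<in>insert 0 (insert p {1..<p}). g k) = g 0 \<oplus> (g p \<oplus> (\<Oplus>k\<in>{1..<p}. g k))"
    using p0 gc by (simp add: finsum_insert)
  also have "(\<Oplus>k\<in>{1..<p}. g k) = (\<Oplus>k\<in>{1..<p}. \<zero>)"
  proof (intro finsum_cong')
    fix k assume k: "k \<in> {1..<p}"
    then have "p dvd (p choose k)" using p by (intro dvd_choose_prime) auto
    then obtain m where "p choose k = p * m" by blast
    then show "g k = \<zero>" unfolding g_def using x y ch by (simp add: char_mult_zero)
  qed (use gc in auto)
  also have "(\<Oplus>k\<in>{1..<p}. \<zero>) = \<zero>" by (rule finsum_zero)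
  finally show ?thesis using x y p0 by (simp add: g_def a_comm)
qed

lemma (in cring) frobenius_pow:
  fixes p :: nat
  assumes p: "Factorial_Ring.prime p" and ch: "[p] \<cdot> \<one> = \<zero>" and x: "x \<in> carrier R" and y: "y \<in> carrier R"
  shows "(x \<oplus> y) [^] (p ^ k) = x [^] (p ^ k) \<oplus> y [^] (p ^ k)"
proof (induction k)
  case 0 then show ?case using x y by (simp add: nat_pow_eone)
next
  case (Suc k)
  have "(x \<oplus> y) [^] (p ^ Suc k) = ((x \<oplus> y) [^] (p ^ k)) [^] p"
    using x y by (simp add: nat_pow_pow mult.commute)
  also have "\<dots> = (x [^] (p ^ k)) [^] p \<oplus> (y [^] (p ^ k)) [^] p"
    unfolding Suc using x y by (intro frobenius[OF p ch]) auto
  finally show ?case using x y by (simp add: nat_pow_pow mult.commute)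
qed

lemma (in cring) frobenius_pow_neg:
  fixes p :: nat
  assumes p: "Factorial_Ring.prime p" and ch: "[p] \<cdot> \<one> = \<zero>" and x: "x \<in> carrier R"
  shows "(\<ominus> x) [^] (p ^ k) = \<ominus> (x [^] (p ^ k))"
proof -
  have "(\<ominus> x) [^] (p ^ k) \<oplus> x [^] (p ^ k) = (\<ominus> x \<oplus> x) [^] (p ^ k)"
    using frobenius_pow[OF p ch, of "\<ominus> x" x k] x by simp
  also have "\<dots> = \<zero>" using x p by (simp add: l_neg prime_gt_0_nat nat_pow_zero)
  finally show ?thesis using x by (simp add: add.inv_equality)
qed

lemma (in residues) add_pow_one_res: "[n] \<cdot> \<one> = int n mod m"
proof (induction n)
  case 0 then show ?case by (simp add: res_zero_eq)
next
  case (Suc n)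
  have "[Suc n] \<cdot> \<one> = [n] \<cdot> \<one> \<oplus> \<one>" by (simp add: add.nat_pow_Suc)
  also have "\<dots> = (int n mod m + 1) mod m" using Suc by (simp add: res_add_eq res_one_eq)
  also have "\<dots> = int (Suc n) mod m" by (simp add: mod_add_right_eq add.commute)
  finally show ?case .
qed

lemma ring_hom_add_pow:
  fixes n :: nat
  assumes "ring R" "ring S" "h \<in> ring_hom R S" "x \<in> carrier R"
  shows "h ([n] \<cdot>\<^bsub>R\<^esub> x) = [n] \<cdot>\<^bsub>S\<^esub> h x"
proof (induction n)
  case 0
  interpret ring_hom_ring R S h using assms by (intro ring_hom_ringI2) auto
  show ?case using assms by simp
next
  case (Suc n)
  interpret ring_hom_ring R S h using assms by (intro ring_hom_ringI2) auto
  show ?case using assms Suc by (simp add: R.add.nat_pow_Suc S.add.nat_pow_Suc)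
qed

lemma char_p_closed_field:
  fixes p :: nat
  assumes p: "Factorial_Ring.prime p"
  shows "\<exists>L :: ((int list \<times> nat) multiset \<Rightarrow> int) ring. algebraically_closed L \<and>
           [p] \<cdot>\<^bsub>L\<^esub> \<one>\<^bsub>L\<^esub> = \<zero>\<^bsub>L\<^esub> \<and> (p \<noteq> 2 \<longrightarrow> \<one>\<^bsub>L\<^esub> \<oplus>\<^bsub>L\<^esub> \<one>\<^bsub>L\<^esub> \<noteq> \<zero>\<^bsub>L\<^esub>)"
proof -
  define R where "R = residue_ring (int p)"
  interpret residues_prime p R using p unfolding R_def by unfold_locales auto
  define L where "L = alg_closure"
  define h where "h = (indexed_const :: int \<Rightarrow> ((int list \<times> nat) multiset \<Rightarrow> int))"
  have acl: "algebraic_closure L (h ` carrier R)" and hom: "h \<in> ring_hom R L"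
    using alg_closureE unfolding L_def h_def by auto
  interpret L: algebraic_closure L "h ` carrier R" by (rule acl)
  have ac: "algebraically_closed L" by (rule L.algebraically_closed_axioms)
  interpret H: ring_hom_ring R L h using hom by (intro ring_hom_ringI2) (auto simp: L.ring_axioms ring_axioms)
  have ap: "h ([n] \<cdot>\<^bsub>R\<^esub> \<one>\<^bsub>R\<^esub>) = [n] \<cdot>\<^bsub>L\<^esub> \<one>\<^bsub>L\<^esub>" for n :: nat
    using ring_hom_add_pow[OF ring_axioms L.ring_axioms hom, of "\<one>\<^bsub>R\<^esub>" n] by simp
  have c1: "[p] \<cdot>\<^bsub>L\<^esub> \<one>\<^bsub>L\<^esub> = \<zero>\<^bsub>L\<^esub>"
    using ap[of p] by (simp add: add_pow_one_res res_zero_eq[symmetric])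
  have inj: "inj_on h (carrier R)"
  proof (rule H.non_trivial_field_hom_imp_inj[OF is_field])
    have "h \<one>\<^bsub>R\<^esub> \<in> h ` carrier R" by (rule imageI) simp
    then show "h ` carrier R \<noteq> {\<zero>\<^bsub>L\<^esub>}" using L.one_not_zero H.hom_one by (metis singletonD)
  qed
  have c2: "\<one>\<^bsub>L\<^esub> \<oplus>\<^bsub>L\<^esub> \<one>\<^bsub>L\<^esub> \<noteq> \<zero>\<^bsub>L\<^esub>" if "p \<noteq> 2"
  proof
    assume "\<one>\<^bsub>L\<^esub> \<oplus>\<^bsub>L\<^esub> \<one>\<^bsub>L\<^esub> = \<zero>\<^bsub>L\<^esub>"
    then have "h ([(2::nat)] \<cdot>\<^bsub>R\<^esub> \<one>\<^bsub>R\<^esub>) = h \<zero>\<^bsub>R\<^esub>"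
      using ap[of 2] by (simp add: numeral_2_eq_2 L.add.nat_pow_Suc)
    moreover have "p > 2" using that p prime_ge_2_nat by (metis le_neq_implies_less)
    moreover have "[(2::nat)] \<cdot>\<^bsub>R\<^esub> \<one>\<^bsub>R\<^esub> = (2::int)" using \<open>p > 2\<close> by (simp add: add_pow_one_res)
    ultimately have "h 2 = h 0" by (simp add: res_zero_eq)
    moreover have "(2::int) \<in> carrier R" "(0::int) \<in> carrier R" using \<open>p > 2\<close> by (auto simp: res_carrier_eq)
    ultimately have "(2::int) = 0" using inj unfolding inj_on_def by blast
    then show False by simp
  qed
  show ?thesis using ac c1 c2 by blast
qed

lemma (in field) frob_fixed_closed:
  fixes p k :: nat
  assumes p: "Factorial_Ring.prime p" and ch: "[p] \<cdot> \<one> = \<zero>"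
  defines "S \<equiv> {x \<in> carrier R. x [^] (p ^ k) = x}"
  shows "\<zero> \<in> S" "\<one> \<in> S" "x \<in> S \<Longrightarrow> y \<in> S \<Longrightarrow> x \<oplus> y \<in> S"
    "x \<in> S \<Longrightarrow> y \<in> S \<Longrightarrow> x \<otimes> y \<in> S" "x \<in> S \<Longrightarrow> \<ominus> x \<in> S"
    "x \<in> S \<Longrightarrow> x \<noteq> \<zero> \<Longrightarrow> inv x \<in> S"
proof -
  have pk: "p ^ k \<noteq> 0" using p prime_gt_0_nat by simp
  show "\<zero> \<in> S" using pk by (simp add: S_def nat_pow_zero)
  show "\<one> \<in> S" by (simp add: S_def)
  show "x \<in> S \<Longrightarrow> y \<in> S \<Longrightarrow> x \<oplus> y \<in> S"
    unfolding S_def using frobenius_pow[OF p ch] by auto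
  show "x \<in> S \<Longrightarrow> y \<in> S \<Longrightarrow> x \<otimes> y \<in> S"
    unfolding S_def by (auto simp: nat_pow_distrib)
  show "x \<in> S \<Longrightarrow> \<ominus> x \<in> S"
    unfolding S_def using frobenius_pow_neg[OF p ch] by auto
  assume x: "x \<in> S" "x \<noteq> \<zero>"
  then have xc: "x \<in> carrier R" and xu: "x \<in> Units R" using field_Units by (auto simp: S_def)
  have ic: "inv x \<in> carrier R" using xu by simp
  have "x \<otimes> inv x [^] (p ^ k) = x [^] (p ^ k) \<otimes> inv x [^] (p ^ k)" using x by (simp add: S_def)
  also have "\<dots> = (x \<otimes> inv x) [^] (p ^ k)" using xc ic by (simp add: nat_pow_distrib)
  also have "\<dots> = \<one>" using xu by simp
  finally have "inv x = inv x [^] (p ^ k)" using xc ic by (intro comm_inv_char) auto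
  then show "inv x \<in> S" using ic by (simp add: S_def)
qed

context algebraically_closed
begin

lemma poly_char:
  fixes p :: nat
  assumes ch: "[p] \<cdot> \<one> = \<zero>"
  shows "[p] \<cdot>\<^bsub>poly_ring L\<^esub> \<one>\<^bsub>poly_ring L\<^esub> = \<zero>\<^bsub>poly_ring L\<^esub>"
proof -
  have e: "L\<lparr>carrier := carrier L\<rparr> = L" by simp
  have hom: "poly_of_const \<in> ring_hom L (poly_ring L)"
    using canonical_embedding_is_hom[OF carrier_is_subring] unfolding e .
  have "poly_of_const ([p] \<cdot> \<one>) = [p] \<cdot>\<^bsub>poly_ring L\<^esub> poly_of_const \<one>"
    by (rule ring_hom_add_pow[OF ring_axioms univ_poly_is_ring[OF carrier_is_subring] hom]) simp
  then show ?thesis using ch by (simp add: poly_of_const_def univ_poly_one univ_poly_zero)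
qed

lemma card_frob_fixed:
  fixes p k :: nat
  assumes p: "Factorial_Ring.prime p" and ch: "[p] \<cdot> \<one> = \<zero>" and k: "k > 0"
  shows "card {x \<in> carrier L. x [^] (p ^ k) = x} = p ^ k"
proof -
  define q where "q = p ^ k"
  define S where "S = {x \<in> carrier L. x [^] q = x}"
  have p2: "p \<ge> 2" using p prime_ge_2_nat by blast
  have "p ^ 1 \<le> p ^ k" using k p2 by (intro power_increasing) auto
  then have q2: "q \<ge> 2" using p2 by (simp add: q_def)
  interpret UP: domain "poly_ring L" using univ_poly_is_domain[OF carrier_is_subring] .
  have Xc: "X \<in> carrier (poly_ring L)" using var_closed(1)[OF carrier_is_subring] .
  define P where "P = X [^]\<^bsub>poly_ring L\<^esub> q \<ominus>\<^bsub>poly_ring L\<^esub> X"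
  have Pc: "P \<in> carrier (poly_ring L)" using Xc by (simp add: P_def)
  have evP: "eval P x = x [^] q \<ominus> x" if xc: "x \<in> carrier L" for x
  proof -
    interpret E: ring_hom_ring "poly_ring L" L "\<lambda>p. eval p x"
      using eval_ring_hom[OF carrier_is_subring xc] .
    show ?thesis using Xc xc by (simp add: P_def E.hom_nat_pow eval_var UP.minus_eq minus_eq)
  qed
  have Xq: "X [^]\<^bsub>poly_ring L\<^esub> q = monom \<one> q"
    using unitary_monom_eq_var_pow[OF carrier_is_subring] by simp
  have nX: "\<ominus>\<^bsub>poly_ring L\<^esub> X = [\<ominus> \<one>, \<ominus> \<zero>]"
    using univ_poly_a_inv_def'[OF carrier_is_subring Xc] by (simp add: var_def)
  have P_eq: "P = poly_add (monom \<one> q) [\<ominus> \<one>, \<zero>]"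
    unfolding P_def UP.minus_eq Xq nX by (simp add: univ_poly_add)
  have degP: "degree P = q"
  proof -
    have "polynomial (carrier L) (monom \<one> q)" by (rule monom_is_polynomial[OF carrier_is_subring]) simp
    moreover have "polynomial (carrier L) [\<ominus> \<one>, \<zero>]" by (simp add: polynomial_def)
    moreover have "degree (monom \<one> q) \<noteq> degree [\<ominus> \<one>, \<zero>]" using q2 by (simp add: monom_def)
    ultimately show ?thesis unfolding P_eq
      using q2 carrier_is_subring by (subst poly_add_degree_eq[of "carrier L"]) (auto simp: monom_def)
  qed
  have Pne: "P \<noteq> []" using degP q2 by auto
  have sz: "size (roots P) = q"
    using roots_over_carrier[OF Pc] degP unfolding splitted_def by simp
  have cnt1: "count (roots P) a = 1" if aS: "a \<in> S" for a
  proof -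
    have ac: "a \<in> carrier L" and aq: "a [^] q = a" using aS by (auto simp: S_def)
    have e: "L\<lparr>carrier := carrier L\<rparr> = L" by simp
    have hom: "poly_of_const \<in> ring_hom L (poly_ring L)"
      using canonical_embedding_is_hom[OF carrier_is_subring] unfolding e .
    interpret C: ring_hom_ring L "poly_ring L" poly_of_const
      using hom by (intro ring_hom_ringI2) (auto simp: ring_axioms UP.ring_axioms)
    define c where "c = poly_of_const a"
    have cc: "c \<in> carrier (poly_ring L)" using ac by (simp add: c_def)
    have cq: "c [^]\<^bsub>poly_ring L\<^esub> q = c" using ac aq by (simp add: c_def C.hom_nat_pow[symmetric])
    define Y where "Y = [\<one>, \<ominus> a]"
    have Yc: "Y \<in> carrier (poly_ring L)"
      unfolding Y_def sym[OF univ_poly_carrier] polynomial_def using ac by simp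
    have YX: "Y \<oplus>\<^bsub>poly_ring L\<^esub> c = X"
    proof (cases "a = \<zero>")
      case True
      then show ?thesis by (simp add: Y_def c_def poly_of_const_def univ_poly_add var_def)
    next
      case False
      then show ?thesis using ac by (simp add: Y_def c_def poly_of_const_def univ_poly_add var_def l_neg)
    qed
    have "X [^]\<^bsub>poly_ring L\<^esub> q = Y [^]\<^bsub>poly_ring L\<^esub> q \<oplus>\<^bsub>poly_ring L\<^esub> c"
      using UP.frobenius_pow[OF p poly_char[OF ch] Yc cc, of k] cq unfolding YX q_def by simp
    then have "P = (Y [^]\<^bsub>poly_ring L\<^esub> q \<oplus>\<^bsub>poly_ring L\<^esub> c) \<ominus>\<^bsub>poly_ring L\<^esub> (Y \<oplus>\<^bsub>poly_ring L\<^esub> c)"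
      unfolding P_def YX by simp
    also have "\<dots> = Y [^]\<^bsub>poly_ring L\<^esub> q \<ominus>\<^bsub>poly_ring L\<^esub> Y"
      using Yc cc by (simp add: UP.minus_eq UP.minus_add UP.a_ac UP.r_neg2 UP.r_neg1)
    also have "Y [^]\<^bsub>poly_ring L\<^esub> q = Y \<otimes>\<^bsub>poly_ring L\<^esub> Y [^]\<^bsub>poly_ring L\<^esub> (q - 1)"
      using q2 Yc UP.nat_pow_Suc2[of Y "q - 1"] by simp
    finally have PY: "P = Y \<otimes>\<^bsub>poly_ring L\<^esub> (Y [^]\<^bsub>poly_ring L\<^esub> (q - 1) \<ominus>\<^bsub>poly_ring L\<^esub> \<one>\<^bsub>poly_ring L\<^esub>)"
      using Yc by (simp add: UP.minus_eq UP.r_distr UP.r_minus)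
    define G where "G = Y [^]\<^bsub>poly_ring L\<^esub> (q - 1) \<ominus>\<^bsub>poly_ring L\<^esub> \<one>\<^bsub>poly_ring L\<^esub>"
    have PYG: "P = [\<one>, \<ominus> a] \<otimes>\<^bsub>poly_ring L\<^esub> G" using PY by (simp add: G_def Y_def)
    have Gc: "G \<in> carrier (poly_ring L)" using Yc by (simp add: G_def)
    have evY: "eval Y a = \<zero>" using ac by (simp add: Y_def r_neg)
    have evG: "eval G a = \<ominus> \<one>"
    proof -
      interpret E: ring_hom_ring "poly_ring L" L "\<lambda>p. eval p a"
        using eval_ring_hom[OF carrier_is_subring ac] .
      show ?thesis using Yc q2 evY by (simp add: G_def E.hom_nat_pow UP.minus_eq nat_pow_zero)
    qed
    have n1: "\<ominus> \<one> \<noteq> \<zero>" by (metis minus_minus minus_zero one_closed one_not_zero)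
    have Gne: "G \<noteq> []"
    proof
      assume "G = []" then have "eval G a = \<zero>" by simp
      with evG n1 show False by simp
    qed
    have "roots P = add_mset a (roots G)"
      unfolding PYG by (rule poly_mult_degree_one_monic_imp_same_roots[OF ac Gc Gne])
    moreover have "\<not> is_root G a" using evG n1 unfolding is_root_def by simp
    then have "count (roots G) a = 0" using roots_mem_iff_is_root[OF Gc] by (metis not_in_iff)
    ultimately show ?thesis by simp
  qed
  have cnt0: "count (roots P) a = 0" if aS: "a \<notin> S" for a
  proof -
    have "\<not> is_root P a"
      using aS evP unfolding is_root_def S_def by auto
    then show ?thesis using roots_mem_iff_is_root[OF Pc] by (metis not_in_iff)
  qed
  have finS: "finite S"
  proof (rule finite_subset)
    show "S \<subseteq> set_mset (roots P)" by (metis cnt1 not_in_iff one_neq_zero subsetI)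
  qed simp
  have "roots P = mset_set S"
  proof (rule multiset_eqI)
    fix x show "count (roots P) x = count (mset_set S) x"
      by (cases "x \<in> S") (simp_all add: cnt1 cnt0 finS count_mset_set)
  qed
  then have "card S = q" using sz finS by simp
  then show ?thesis by (simp add: S_def q_def)
qed

end

lemma finite_field_exists:
  fixes q :: nat
  assumes "primepow q"
  obtains L :: "((int list \<times> nat) multiset \<Rightarrow> int) ring" and S where
    "field L" "S \<subseteq> carrier L" "finite S" "card S = q" "\<zero>\<^bsub>L\<^esub> \<in> S"
    "\<And>x y. x \<in> S \<Longrightarrow> y \<in> S \<Longrightarrow> x \<oplus>\<^bsub>L\<^esub> y \<in> S"
    "\<And>x y. x \<in> S \<Longrightarrow> y \<in> S \<Longrightarrow> x \<otimes>\<^bsub>L\<^esub> y \<in> S"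
    "\<And>x. x \<in> S \<Longrightarrow> \<ominus>\<^bsub>L\<^esub> x \<in> S"
    "\<And>x. x \<in> S \<Longrightarrow> x \<noteq> \<zero>\<^bsub>L\<^esub> \<Longrightarrow> inv\<^bsub>L\<^esub> x \<in> S"
    "odd q \<Longrightarrow> \<one>\<^bsub>L\<^esub> \<oplus>\<^bsub>L\<^esub> \<one>\<^bsub>L\<^esub> \<noteq> \<zero>\<^bsub>L\<^esub>"
proof -
  obtain p k where p: "Factorial_Ring.prime p" and k: "k > 0" and q: "q = p ^ k"
    using assms unfolding primepow_def by auto
  obtain L :: "((int list \<times> nat) multiset \<Rightarrow> int) ring" where ac: "algebraically_closed L"
    and ch: "[p] \<cdot>\<^bsub>L\<^esub> \<one>\<^bsub>L\<^esub> = \<zero>\<^bsub>L\<^esub>" and two: "p \<noteq> 2 \<longrightarrow> \<one>\<^bsub>L\<^esub> \<oplus>\<^bsub>L\<^esub> \<one>\<^bsub>L\<^esub> \<noteq> \<zero>\<^bsub>L\<^esub>"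
    using char_p_closed_field[OF p] by blast
  interpret L: algebraically_closed L by (rule ac)
  define S where "S = {x \<in> carrier L. x [^]\<^bsub>L\<^esub> (p ^ k) = x}"
  have cS: "card S = q" unfolding S_def q using L.card_frob_fixed[OF p ch k] .
  have "q > 0" using q p prime_gt_0_nat by simp
  then have fS: "finite S" using cS card_gt_0_iff by metis
  have odd2: "odd q \<Longrightarrow> p \<noteq> 2" using q k by auto
  show ?thesis
  proof (rule that[of L S])
    show "field L" by (rule L.field_axioms)
  qed (use L.frob_fixed_closed[OF p ch, where k=k] cS fS odd2 two in \<open>auto simp: S_def\<close>)
qed

locale ffield = field L for L (structure) +
  fixes S
  assumes S_sub: "S \<subseteq> carrier L" and S_fin: "finite S" and S_zero: "\<zero> \<in> S"
    and S_add: "\<And>x y. x \<in> S \<Longrightarrow> y \<in> S \<Longrightarrow> x \<oplus> y \<in> S"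
    and S_mult: "\<And>x y. x \<in> S \<Longrightarrow> y \<in> S \<Longrightarrow> x \<otimes> y \<in> S"
    and S_neg: "\<And>x. x \<in> S \<Longrightarrow> \<ominus> x \<in> S"
    and S_inv: "\<And>x. x \<in> S \<Longrightarrow> x \<noteq> \<zero> \<Longrightarrow> inv x \<in> S"
begin

definition F where "F = S - {\<zero>}"

definition pi :: "'a \<Rightarrow> 'a \<Rightarrow> 'a \<Rightarrow> 'a" where
  "pi a b x = (if a \<otimes> x \<oplus> b = \<zero> then b else a \<otimes> x \<oplus> b)"

lemma F_carrier: "x \<in> F \<Longrightarrow> x \<in> carrier L" using S_sub by (auto simp: F_def)

lemma F_fin: "finite F" using S_fin by (simp add: F_def)

lemma mult_eq_zero: "a \<in> carrier L \<Longrightarrow> x \<in> carrier L \<Longrightarrow> a \<otimes> x = \<zero> \<longleftrightarrow> a = \<zero> \<or> x = \<zero>"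
  using integral by auto

lemma pi_in: assumes "a \<in> F" "b \<in> S" "x \<in> F" shows "pi a b x \<in> F"
proof -
  have ac: "a \<in> carrier L" "x \<in> carrier L" "b \<in> carrier L" using assms F_carrier S_sub by auto
  have "a \<otimes> x \<oplus> b \<in> S" using assms by (auto simp: F_def intro!: S_add S_mult)
  moreover have "b \<noteq> \<zero>" if "a \<otimes> x \<oplus> b = \<zero>"
    using that assms ac mult_eq_zero[of a x] by (auto simp: F_def)
  ultimately show ?thesis using assms by (auto simp: pi_def F_def)
qed

lemma pi_inj: assumes "a \<in> F" "b \<in> S" shows "inj_on (pi a b) F"
proof
  fix x y assume x: "x \<in> F" and y: "y \<in> F" and e: "pi a b x = pi a b y"
  have c: "a \<in> carrier L" "x \<in> carrier L" "y \<in> carrier L" "b \<in> carrier L"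
    using assms x y F_carrier S_sub by auto
  have a0: "a \<noteq> \<zero>" "x \<noteq> \<zero>" "y \<noteq> \<zero>" using assms x y by (auto simp: F_def)
  have ax: "a \<otimes> x \<noteq> \<zero>" "a \<otimes> y \<noteq> \<zero>" using a0 c mult_eq_zero by auto
  show "x = y"
  proof (cases "a \<otimes> x \<oplus> b = \<zero>"; cases "a \<otimes> y \<oplus> b = \<zero>")
    assume "a \<otimes> x \<oplus> b = \<zero>" "a \<otimes> y \<oplus> b = \<zero>"
    then have "a \<otimes> x = a \<otimes> y" using c by (metis add.right_cancel m_closed)
    then show ?thesis using c a0 m_lcancel by blast
  next
    assume "a \<otimes> x \<oplus> b = \<zero>" "a \<otimes> y \<oplus> b \<noteq> \<zero>"
    then have "a \<otimes> y \<oplus> b = \<zero> \<oplus> b" using e c by (simp add: pi_def)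
    then have "a \<otimes> y = \<zero>" using c by (metis add.right_cancel m_closed zero_closed)
    then show ?thesis using ax by simp
  next
    assume "a \<otimes> x \<oplus> b \<noteq> \<zero>" "a \<otimes> y \<oplus> b = \<zero>"
    then have "a \<otimes> x \<oplus> b = \<zero> \<oplus> b" using e c by (simp add: pi_def)
    then have "a \<otimes> x = \<zero>" using c by (metis add.right_cancel m_closed zero_closed)
    then show ?thesis using ax by simp
  next
    assume "a \<otimes> x \<oplus> b \<noteq> \<zero>" "a \<otimes> y \<oplus> b \<noteq> \<zero>"
    then have "a \<otimes> x \<oplus> b = a \<otimes> y \<oplus> b" using e by (simp add: pi_def)
    then have "a \<otimes> x = a \<otimes> y" using c by (metis add.right_cancel m_closed)
    then show ?thesis using c a0 m_lcancel by blast
  qed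
qed

lemma pi_bij: assumes "a \<in> F" "b \<in> S" shows "bij_betw (pi a b) F F"
proof -
  have "pi a b ` F \<subseteq> F" using pi_in assms by auto
  moreover have "inj_on (pi a b) F" using pi_inj assms .
  ultimately have "pi a b ` F = F" using F_fin by (simp add: endo_inj_surj)
  then show ?thesis using \<open>inj_on (pi a b) F\<close> by (simp add: bij_betw_def)
qed

lemma diff_zero_iff: "x \<in> carrier L \<Longrightarrow> y \<in> carrier L \<Longrightarrow> x \<ominus> y = \<zero> \<longleftrightarrow> x = y"
proof
  assume c: "x \<in> carrier L" "y \<in> carrier L" and "x \<ominus> y = \<zero>"
  have "x = (x \<ominus> y) \<oplus> y" using c by algebra
  then show "x = y" using \<open>x \<ominus> y = \<zero>\<close> c by (metis l_zero)
next
  assume c: "x \<in> carrier L" "y \<in> carrier L" and "x = y"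
  then show "x \<ominus> y = \<zero>" by (simp add: r_neg minus_eq)
qed

lemma zero_set_le1: assumes "a \<in> F" "b \<in> S"
  shows "card {x \<in> F. a \<otimes> x \<oplus> b = \<zero>} \<le> 1"
proof -
  have "x = y" if x: "x \<in> F" "a \<otimes> x \<oplus> b = \<zero>" and y: "y \<in> F" "a \<otimes> y \<oplus> b = \<zero>" for x y
  proof -
    have c: "a \<in> carrier L" "x \<in> carrier L" "y \<in> carrier L" "b \<in> carrier L"
      using assms x y F_carrier S_sub by auto
    have "a \<noteq> \<zero>" using assms by (auto simp: F_def)
    from x y have "a \<otimes> x = a \<otimes> y" using c by (metis add.right_cancel m_closed)
    then show ?thesis using c \<open>a \<noteq> \<zero>\<close> m_lcancel by blast
  qed
  then have "card {x \<in> F. a \<otimes> x \<oplus> b = \<zero>} \<le> Suc 0" using F_fin by (subst card_le_Suc0_iff_eq) auto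
  then show ?thesis by simp
qed

lemma agree_le2:
  assumes a: "a \<in> F" and a': "a' \<in> F" and b: "b \<in> S" and b': "b' \<in> S" and ne: "(a, b) \<noteq> (a', b')"
    and nb: "\<not> (b \<noteq> \<zero> \<and> b' \<noteq> \<zero> \<and> a \<noteq> a' \<and> a \<otimes> a' = (a \<oplus> a') \<otimes> (a \<oplus> a') \<and> a' \<otimes> b' = \<ominus> (a \<otimes> b))"
  shows "card {x \<in> F. pi a b x = pi a' b' x} \<le> 2"
proof -
  have c: "a \<in> carrier L" "a' \<in> carrier L" "b \<in> carrier L" "b' \<in> carrier L"
    using a a' b b' F_carrier S_sub by auto
  have a0: "a \<noteq> \<zero>" "a' \<noteq> \<zero>" using a a' by (auto simp: F_def)
  define A where "A = {x \<in> F. pi a b x = pi a' b' x}"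
  define Z where "Z = {x \<in> F. a \<otimes> x \<oplus> b = \<zero>}"
  define Z' where "Z' = {x \<in> F. a' \<otimes> x \<oplus> b' = \<zero>}"
  have fin: "finite Z" "finite Z'" "finite A" using F_fin by (auto simp: Z_def Z'_def A_def)
  have cZ: "card Z \<le> 1" "card Z' \<le> 1" unfolding Z_def Z'_def using zero_set_le1 a a' b b' by auto
  show ?thesis
  proof (cases "a = a'")
    case True
    then have "b \<noteq> b'" using ne by simp
    have "A \<subseteq> Z \<union> Z'"
    proof
      fix x assume "x \<in> A"
      then have x: "x \<in> F" and e: "pi a b x = pi a' b' x" by (auto simp: A_def)
      have xc: "x \<in> carrier L" using x F_carrier by auto
      show "x \<in> Z \<union> Z'"
      proof (rule ccontr)
        assume "x \<notin> Z \<union> Z'"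
        then have "a \<otimes> x \<oplus> b = a \<otimes> x \<oplus> b'" using e x True by (auto simp: Z_def Z'_def pi_def)
        then have "b = b'" using c xc by (metis add.right_cancel a_comm m_closed)
        then show False using \<open>b \<noteq> b'\<close> by simp
      qed
    qed
    then have "card A \<le> card (Z \<union> Z')" using fin by (intro card_mono) auto
    also have "\<dots> \<le> card Z + card Z'" by (rule card_Un_le)
    finally show ?thesis using cZ by (simp add: A_def)
  next
    case False
    have aa: "a \<ominus> a' \<noteq> \<zero>" using False c diff_zero_iff by auto
    define N where "N = {x \<in> A. a \<otimes> x \<oplus> b \<noteq> \<zero> \<and> a' \<otimes> x \<oplus> b' \<noteq> \<zero>}"
    have finN: "finite N" using fin by (simp add: N_def)
    have cN: "card N \<le> 1"
    proof -
      have key: "(a \<ominus> a') \<otimes> x = b' \<ominus> b" if x: "x \<in> N" for x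
      proof -
        have xc: "x \<in> carrier L" using x F_carrier by (auto simp: N_def A_def)
        have e: "a \<otimes> x \<oplus> b = a' \<otimes> x \<oplus> b'" using x by (auto simp: N_def A_def pi_def)
        have "(a \<ominus> a') \<otimes> x = (a \<otimes> x \<oplus> b) \<ominus> (a' \<otimes> x \<oplus> b)" using c xc by algebra
        also have "\<dots> = (a' \<otimes> x \<oplus> b') \<ominus> (a' \<otimes> x \<oplus> b)" using e by simp
        also have "\<dots> = b' \<ominus> b" using c xc by algebra
        finally show ?thesis .
      qed
      have "x = y" if "x \<in> N" "y \<in> N" for x y
      proof -
        have "x \<in> carrier L" "y \<in> carrier L" using that F_carrier by (auto simp: N_def A_def)
        moreover have "(a \<ominus> a') \<otimes> x = (a \<ominus> a') \<otimes> y" using key that by simp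
        ultimately show ?thesis using aa c m_lcancel[of "a \<ominus> a'" x y] by auto
      qed
      then have "card N \<le> Suc 0" using finN by (subst card_le_Suc0_iff_eq) auto
      then show ?thesis by simp
    qed
    have disj: "A \<inter> Z = {} \<or> A \<inter> Z' = {}"
    proof (rule ccontr)
      assume "\<not> (A \<inter> Z = {} \<or> A \<inter> Z' = {})"
      then obtain u v where u: "u \<in> A" "u \<in> Z" and v: "v \<in> A" "v \<in> Z'" by blast
      have uc: "u \<in> carrier L" "u \<noteq> \<zero>" and vc: "v \<in> carrier L" "v \<noteq> \<zero>"
        using u v F_carrier by (auto simp: A_def F_def)
      have Zu: "a \<otimes> u \<oplus> b = \<zero>" using u by (simp add: Z_def)
      have Zv: "a' \<otimes> v \<oplus> b' = \<zero>" using v by (simp add: Z'_def)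
      have H1: "a' \<otimes> u \<oplus> b' = b"
      proof (cases "a' \<otimes> u \<oplus> b' = \<zero>")
        case True
        then have "b = b'" using u Zu by (simp add: A_def pi_def)
        then have "a \<otimes> u = a' \<otimes> u" using Zu True c uc by (metis add.right_cancel m_closed)
        then have "a = a'" using c uc m_rcancel by blast
        then show ?thesis using False by simp
      next
        case False
        then show ?thesis using u Zu by (simp add: A_def pi_def)
      qed
      have H2: "a \<otimes> v \<oplus> b = b'"
      proof (cases "a \<otimes> v \<oplus> b = \<zero>")
        case True
        then have "b = b'" using v Zv by (simp add: A_def pi_def)
        then have "a \<otimes> v = a' \<otimes> v" using Zv True c vc by (metis add.right_cancel m_closed)
        then have "a = a'" using c vc m_rcancel by blast
        then show ?thesis using \<open>a \<noteq> a'\<close> by simp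
      next
        case False
        then show ?thesis using v Zv by (simp add: A_def pi_def)
      qed
      have b0: "b \<noteq> \<zero>"
      proof
        assume "b = \<zero>" then have "a \<otimes> u = \<zero>" using Zu c uc by simp
        then show False using a0 c uc mult_eq_zero by auto
      qed
      have b'0: "b' \<noteq> \<zero>"
      proof
        assume "b' = \<zero>" then have "a' \<otimes> v = \<zero>" using Zv c vc by simp
        then show False using a0 c vc mult_eq_zero by auto
      qed
      have nu: "\<ominus> (a \<otimes> u) = b" using Zu c uc by (metis add.inv_equality a_comm m_closed)
      have nv: "\<ominus> (a' \<otimes> v) = b'" using Zv c vc by (metis add.inv_equality a_comm m_closed)
      have E1: "a \<otimes> b' = b \<otimes> (a \<oplus> a')"
      proof -
        have "a \<otimes> b' = a \<otimes> (a' \<otimes> u \<oplus> b') \<oplus> a' \<otimes> (\<ominus> (a \<otimes> u))" using c uc by algebra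
        also have "\<dots> = a \<otimes> b \<oplus> a' \<otimes> b" unfolding H1 nu ..
        also have "\<dots> = b \<otimes> (a \<oplus> a')" using c by algebra
        finally show ?thesis .
      qed
      have E2: "a' \<otimes> b = b' \<otimes> (a \<oplus> a')"
      proof -
        have "a' \<otimes> b = a' \<otimes> (a \<otimes> v \<oplus> b) \<oplus> a \<otimes> (\<ominus> (a' \<otimes> v))" using c vc by algebra
        also have "\<dots> = a' \<otimes> b' \<oplus> a \<otimes> b'" unfolding H2 nv ..
        also have "\<dots> = b' \<otimes> (a \<oplus> a')" using c by algebra
        finally show ?thesis .
      qed
      have "(a \<otimes> a') \<otimes> (b \<otimes> b') = (a \<otimes> b') \<otimes> (a' \<otimes> b)" using c by algebra
      also have "\<dots> = ((a \<oplus> a') \<otimes> (a \<oplus> a')) \<otimes> (b \<otimes> b')" unfolding E1 E2 using c by algebra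
      finally have K: "a \<otimes> a' = (a \<oplus> a') \<otimes> (a \<oplus> a')"
        using c b0 b'0 mult_eq_zero[of b b'] m_rcancel[of "b \<otimes> b'"] by auto
      have T: "a \<otimes> a \<oplus> a \<otimes> a' \<oplus> a' \<otimes> a' = \<zero>"
      proof -
        have "a \<otimes> a \<oplus> a \<otimes> a' \<oplus> a' \<otimes> a' = (a \<oplus> a') \<otimes> (a \<oplus> a') \<ominus> a \<otimes> a'" using c by algebra
        also have "\<dots> = \<zero>" unfolding K[symmetric] using c diff_zero_iff by simp
        finally show ?thesis .
      qed
      have "a \<otimes> (a' \<otimes> b') \<ominus> a \<otimes> (\<ominus> (a \<otimes> b)) = a' \<otimes> (a \<otimes> b') \<oplus> b \<otimes> (a \<otimes> a)"
        using c by algebra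
      also have "\<dots> = b \<otimes> (a \<otimes> a \<oplus> a \<otimes> a' \<oplus> a' \<otimes> a')" unfolding E1 using c by algebra
      also have "\<dots> = \<zero>" unfolding T using c by simp
      finally have "a \<otimes> (a' \<otimes> b') = a \<otimes> (\<ominus> (a \<otimes> b))" using c diff_zero_iff by simp
      then have "a' \<otimes> b' = \<ominus> (a \<otimes> b)" using c a0 m_lcancel by simp
      then show False using nb b0 b'0 \<open>a \<noteq> a'\<close> K by blast
    qed
    have sub: "A \<subseteq> N \<union> (A \<inter> Z) \<union> (A \<inter> Z')"
      by (auto simp: N_def Z_def Z'_def A_def)
    show ?thesis
    proof (cases "A \<inter> Z = {}")
      case True
      then have "A \<subseteq> N \<union> Z'" using sub by auto
      then have "card A \<le> card (N \<union> Z')" using fin finN by (intro card_mono) auto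
      also have "\<dots> \<le> card N + card Z'" by (rule card_Un_le)
      finally show ?thesis using cN cZ by (simp add: A_def)
    next
      case False
      then have "A \<subseteq> N \<union> Z" using sub disj by auto
      then have "card A \<le> card (N \<union> Z)" using fin finN by (intro card_mono) auto
      also have "\<dots> \<le> card N + card Z" by (rule card_Un_le)
      finally show ?thesis using cN cZ by (simp add: A_def)
    qed
  qed
qed

end

lemma greedy_indep:
  fixes V :: "'a set" and E :: "'a \<Rightarrow> 'a \<Rightarrow> bool" and d :: nat
  assumes "finite V" and "\<And>v. v \<in> V \<Longrightarrow> card {w \<in> V. w \<noteq> v \<and> (E v w \<or> E w v)} \<le> d"
  shows "\<exists>I \<subseteq> V. (\<forall>v\<in>I. \<forall>w\<in>I. v \<noteq> w \<longrightarrow> \<not> E v w) \<and> card V \<le> (d + 1) * card I"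
  using assms
proof (induction "card V" arbitrary: V rule: less_induct)
  case less
  show ?case
  proof (cases "V = {}")
    case True then show ?thesis by auto
  next
    case False
    then obtain v where v: "v \<in> V" by blast
    define Nv where "Nv = {w \<in> V. w \<noteq> v \<and> (E v w \<or> E w v)}"
    define V' where "V' = V - insert v Nv"
    have sub: "insert v Nv \<subseteq> V" using v by (auto simp: Nv_def)
    have finV': "finite V'" using less.prems by (simp add: V'_def)
    have cV: "card V = card V' + card (insert v Nv)"
      using card_Diff_subset[OF finite_subset[OF sub less.prems(1)] sub] card_mono[OF less.prems(1) sub]
      by (simp add: V'_def)
    have finN: "finite Nv" using less.prems(1) by (simp add: Nv_def)
    then have "card (insert v Nv) \<le> Suc (card Nv)" by (simp add: card_insert_if)
    then have cN: "card (insert v Nv) \<le> d + 1" using less.prems(2)[OF v] by (simp add: Nv_def)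
    have lt: "card V' < card V" using cV finN by (simp add: card_gt_0_iff)
    have deg: "card {w \<in> V'. w \<noteq> u \<and> (E u w \<or> E w u)} \<le> d" if "u \<in> V'" for u
    proof -
      have "card {w \<in> V'. w \<noteq> u \<and> (E u w \<or> E w u)} \<le> card {w \<in> V. w \<noteq> u \<and> (E u w \<or> E w u)}"
        using less.prems(1) by (intro card_mono) (auto simp: V'_def)
      also have "\<dots> \<le> d" using that less.prems(2) by (auto simp: V'_def)
      finally show ?thesis .
    qed
    obtain I' where I': "I' \<subseteq> V'" "\<forall>v\<in>I'. \<forall>w\<in>I'. v \<noteq> w \<longrightarrow> \<not> E v w" "card V' \<le> (d + 1) * card I'"
      using less.hyps[OF lt finV' deg] by blast
    have vI': "v \<notin> I'" using I'(1) by (auto simp: V'_def)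
    have finI': "finite I'" using I'(1) finV' finite_subset by blast
    have indep: "\<forall>x\<in>insert v I'. \<forall>w\<in>insert v I'. x \<noteq> w \<longrightarrow> \<not> E x w"
    proof (intro ballI impI)
      fix x w assume x: "x \<in> insert v I'" and w: "w \<in> insert v I'" and xw: "x \<noteq> w"
      show "\<not> E x w"
      proof (cases "x = v")
        case True
        then have "w \<in> I'" using w xw by auto
        then have "w \<in> V" "w \<notin> Nv" using I'(1) by (auto simp: V'_def)
        then show ?thesis using True xw by (auto simp: Nv_def)
      next
        case False
        then have xI: "x \<in> I'" using x by auto
        show ?thesis
        proof (cases "w = v")
          case True
          then have "x \<in> V" "x \<notin> Nv" using xI I'(1) by (auto simp: V'_def)
          then show ?thesis using True xw by (auto simp: Nv_def)
        next
          case False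
          then show ?thesis using xI w xw I'(2) by auto
        qed
      qed
    qed
    have "card V \<le> (d + 1) * card (insert v I')"
      using cV cN I'(3) vI' finI' by simp
    moreover have "insert v I' \<subseteq> V" using v I'(1) by (auto simp: V'_def)
    ultimately show ?thesis using indep by blast
  qed
qed

context ffield
begin

lemma half_set:
  assumes two: "\<one> \<oplus> \<one> \<noteq> \<zero>"
  shows "\<exists>P \<subseteq> F. (\<forall>x\<in>P. \<ominus> x \<notin> P) \<and> card F \<le> 2 * card P"
proof -
  have deg: "card {w \<in> F. w \<noteq> v \<and> (w = \<ominus> v \<or> v = \<ominus> w)} \<le> 1" if v: "v \<in> F" for v
  proof -
    have vc: "v \<in> carrier L" using v F_carrier by auto
    have "{w \<in> F. w \<noteq> v \<and> (w = \<ominus> v \<or> v = \<ominus> w)} \<subseteq> {\<ominus> v}"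
      using F_carrier by (auto simp: minus_minus)
    then have "card {w \<in> F. w \<noteq> v \<and> (w = \<ominus> v \<or> v = \<ominus> w)} \<le> card {\<ominus> v}"
      by (intro card_mono) auto
    then show ?thesis by simp
  qed
  obtain P where P: "P \<subseteq> F" "\<forall>v\<in>P. \<forall>w\<in>P. v \<noteq> w \<longrightarrow> \<not> w = \<ominus> v" "card F \<le> (1 + 1) * card P"
    using greedy_indep[of F "\<lambda>v w. w = \<ominus> v" 1] F_fin deg by blast
  have np: "\<ominus> x \<notin> P" if x: "x \<in> P" for x
  proof
    assume nx: "\<ominus> x \<in> P"
    have xc: "x \<in> carrier L" "x \<noteq> \<zero>" using x P(1) F_carrier by (auto simp: F_def)
    show False
    proof (cases "\<ominus> x = x")
      case True
      then have "(\<one> \<oplus> \<one>) \<otimes> x = \<zero>"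
      proof -
        have "(\<one> \<oplus> \<one>) \<otimes> x = x \<ominus> \<ominus> x" using xc by algebra
        then show ?thesis using True xc diff_zero_iff by simp
      qed
      then show False using two xc mult_eq_zero by auto
    next
      case False
      have "x \<noteq> \<ominus> x \<longrightarrow> \<not> \<ominus> x = \<ominus> x" using P(2) x nx by blast
      then show False using False by auto
    qed
  qed
  have "card F \<le> 2 * card P" using P(3) by simp
  then show ?thesis using P(1) np by blast
qed

lemma third_set:
  "\<exists>R \<subseteq> F. (\<forall>x\<in>R. \<forall>y\<in>R. x \<noteq> y \<longrightarrow> x \<otimes> y \<noteq> (x \<oplus> y) \<otimes> (x \<oplus> y)) \<and> card F \<le> 3 * card R"
proof -
  define C where "C = (\<lambda>x y. x \<otimes> y = (x \<oplus> y) \<otimes> (x \<oplus> y))"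
  have Csym: "C x y \<longleftrightarrow> C y x" if "x \<in> carrier L" "y \<in> carrier L" for x y
    using that by (simp add: C_def m_comm a_comm)
  have quad: "w \<otimes> w \<oplus> v \<otimes> w \<oplus> v \<otimes> v = \<zero>" if "C v w" "v \<in> carrier L" "w \<in> carrier L" for v w
  proof -
    have "w \<otimes> w \<oplus> v \<otimes> w \<oplus> v \<otimes> v = (v \<oplus> w) \<otimes> (v \<oplus> w) \<ominus> v \<otimes> w" using that by algebra
    also have "\<dots> = \<zero>" using that diff_zero_iff by (simp add: C_def)
    finally show ?thesis .
  qed
  have two_roots: "w1 \<oplus> w2 \<oplus> v = \<zero>"
    if "C v w1" "C v w2" "w1 \<noteq> w2" "v \<in> carrier L" "w1 \<in> carrier L" "w2 \<in> carrier L" for v w1 w2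
  proof -
    have "(w1 \<ominus> w2) \<otimes> (w1 \<oplus> w2 \<oplus> v) = (w1 \<otimes> w1 \<oplus> v \<otimes> w1 \<oplus> v \<otimes> v) \<ominus> (w2 \<otimes> w2 \<oplus> v \<otimes> w2 \<oplus> v \<otimes> v)"
      using that by algebra
    also have "\<dots> = \<zero>" using quad that by (simp add: diff_zero_iff)
    finally have "(w1 \<ominus> w2) \<otimes> (w1 \<oplus> w2 \<oplus> v) = \<zero>" .
    moreover have "w1 \<ominus> w2 \<noteq> \<zero>" using that diff_zero_iff by simp
    ultimately show ?thesis using that mult_eq_zero by simp
  qed
  have deg: "card {w \<in> F. w \<noteq> v \<and> (C v w \<or> C w v)} \<le> 2" if v: "v \<in> F" for v
  proof (rule ccontr)
    define W where "W = {w \<in> F. w \<noteq> v \<and> (C v w \<or> C w v)}"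
    assume "\<not> card {w \<in> F. w \<noteq> v \<and> (C v w \<or> C w v)} \<le> 2"
    then have c3: "card W \<ge> 3" by (simp add: W_def)
    have finW: "finite W" using F_fin by (simp add: W_def)
    have vc: "v \<in> carrier L" using v F_carrier by auto
    have WC: "w \<in> carrier L \<and> C v w" if "w \<in> W" for w
      using that Csym[OF vc] F_carrier by (auto simp: W_def)
    obtain w1 where w1: "w1 \<in> W" using c3 by fastforce
    have k2: "card (W - {w1}) \<ge> 2" using c3 w1 finW by simp
    have "W - {w1} \<noteq> {}"
    proof
      assume e: "W - {w1} = {}"
      have "card (W - {w1}) = 0" unfolding e by simp
      then show False using k2 by simp
    qed
    then obtain w2 where w2: "w2 \<in> W - {w1}" by blast
    have k1: "card (W - {w1} - {w2}) \<ge> 1" using c3 w1 w2 finW by (simp add: card_Diff_subset)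
    have "W - {w1} - {w2} \<noteq> {}"
    proof
      assume e: "W - {w1} - {w2} = {}"
      have "card (W - {w1} - {w2}) = 0" unfolding e by simp
      then show False using k1 by simp
    qed
    then obtain w3 where w3: "w3 \<in> W - {w1} - {w2}" by blast
    have e1: "w1 \<oplus> w2 \<oplus> v = \<zero>" using two_roots WC w1 w2 vc by auto
    have e2: "w1 \<oplus> w3 \<oplus> v = \<zero>" using two_roots WC w1 w3 vc by auto
    have c123: "w1 \<in> carrier L" "w2 \<in> carrier L" "w3 \<in> carrier L" using WC w1 w2 w3 by auto
    have "w2 = (w1 \<oplus> w2 \<oplus> v) \<ominus> (w1 \<oplus> v)" using c123 vc by algebra
    also have "\<dots> = (w1 \<oplus> w3 \<oplus> v) \<ominus> (w1 \<oplus> v)" using e1 e2 by simp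
    also have "\<dots> = w3" using c123 vc by algebra
    finally have "w2 = w3" .
    then show False using w3 by simp
  qed
  obtain R where R: "R \<subseteq> F" "\<forall>v\<in>R. \<forall>w\<in>R. v \<noteq> w \<longrightarrow> \<not> C v w" "card F \<le> (2 + 1) * card R"
    using greedy_indep[of F C 2] F_fin deg by blast
  have "card F \<le> 3 * card R" using R(3) by simp
  moreover have "\<forall>x\<in>R. \<forall>y\<in>R. x \<noteq> y \<longrightarrow> x \<otimes> y \<noteq> (x \<oplus> y) \<otimes> (x \<oplus> y)"
    using R(2) unfolding C_def by blast
  ultimately show ?thesis using R(1) by blast
qed

end

context ffield
begin

lemma M_ge:
  assumes I: "I \<subseteq> F \<times> S"
    and nb: "\<And>a b a' b'. (a, b) \<in> I \<Longrightarrow> (a', b') \<in> I \<Longrightarrow> (a, b) \<noteq> (a', b') \<Longrightarrow>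
       \<not> (b \<noteq> \<zero> \<and> b' \<noteq> \<zero> \<and> a \<noteq> a' \<and> a \<otimes> a' = (a \<oplus> a') \<otimes> (a \<oplus> a') \<and> a' \<otimes> b' = \<ominus> (a \<otimes> b))"
    and n3: "card F \<ge> 3"
  shows "card I \<le> M (card F) (card F - 2)"
proof -
  define n where "n = card F"
  obtain e where e0: "bij_betw e {0..<n} F" using ex_bij_betw_nat_finite[OF F_fin] unfolding n_def by blast
  have e: "bij_betw e {..<n} F" using e0 by (simp add: lessThan_atLeast0)
  define e' where "e' = inv_into {..<n} e"
  have e': "bij_betw e' F {..<n}" unfolding e'_def by (rule bij_betw_inv_into[OF e])
  have e'e: "e' (e i) = i" if "i < n" for i
    using e that unfolding e'_def by (simp add: bij_betw_inv_into_left)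
  have e'inj: "inj_on e' F" using e' bij_betw_imp_inj_on by blast
  define sg where "sg = (\<lambda>(a, b). (\<lambda>i. if i < n then e' (pi a b (e i)) else i))"
  have perm: "sg (a, b) permutes {..<n}" if ab: "(a, b) \<in> I" for a b
  proof -
    have a: "a \<in> F" and b: "b \<in> S" using ab I by auto
    have "bij_betw (e' \<circ> (pi a b \<circ> e)) {..<n} {..<n}"
      by (rule bij_betw_trans[OF bij_betw_trans[OF e pi_bij[OF a b]] e'])
    then have "bij_betw (sg (a, b)) {..<n} {..<n}"
      by (rule bij_betw_cong[THEN iffD1, rotated]) (auto simp: sg_def)
    then show ?thesis by (rule bij_imp_permutes) (auto simp: sg_def)
  qed
  have hdge: "hd (sg (a, b)) (sg (a', b')) \<ge> n - 2"
    if ab: "(a, b) \<in> I" and ab': "(a', b') \<in> I" and ne: "(a, b) \<noteq> (a', b')" for a b a' b'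
  proof -
    have a: "a \<in> F" and b: "b \<in> S" and a': "a' \<in> F" and b': "b' \<in> S" using ab ab' I by auto
    define A where "A = {x \<in> F. pi a b x = pi a' b' x}"
    have cA: "card A \<le> 2" unfolding A_def by (rule agree_le2[OF a a' b b' ne nb[OF ab ab' ne]])
    define B where "B = {i \<in> {..<n}. sg (a, b) i = sg (a', b') i}"
    have BA: "B = e' ` A"
    proof
      show "B \<subseteq> e' ` A"
      proof
        fix i assume "i \<in> B"
        then have i: "i < n" and eq: "e' (pi a b (e i)) = e' (pi a' b' (e i))" by (auto simp: B_def sg_def)
        have ei: "e i \<in> F" using e i by (auto simp: bij_betw_def)
        have "pi a b (e i) = pi a' b' (e i)"
          using eq e'inj pi_in[OF a b ei] pi_in[OF a' b' ei] by (auto simp: inj_on_def)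
        then have "e i \<in> A" using ei by (simp add: A_def)
        then show "i \<in> e' ` A" using e'e[OF i] by (metis image_eqI)
      qed
    next
      show "e' ` A \<subseteq> B"
      proof
        fix i assume "i \<in> e' ` A"
        then obtain x where x: "x \<in> A" and ix: "i = e' x" by blast
        have xF: "x \<in> F" using x by (simp add: A_def)
        have i: "i < n" using e' xF ix by (auto simp: bij_betw_def)
        have "e i = x" using ix xF e unfolding e'_def by (simp add: bij_betw_inv_into_right)
        then show "i \<in> B" using x i by (simp add: B_def sg_def A_def)
      qed
    qed
    have "card B \<le> 2" unfolding BA using cA card_image_le[of A e'] F_fin
      by (metis (no_types, lifting) A_def finite_subset mem_Collect_eq order_trans subsetI)
    have "{i. sg (a, b) i \<noteq> sg (a', b') i} = {..<n} - B"
      by (auto simp: B_def sg_def)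
    then have "hd (sg (a, b)) (sg (a', b')) = card ({..<n} - B)" by (simp add: hd_def)
    also have "\<dots> = n - card B" by (subst card_Diff_subset) (auto simp: B_def)
    finally show ?thesis using \<open>card B \<le> 2\<close> by simp
  qed
  have inj: "inj_on sg I"
  proof
    fix p p' assume p: "p \<in> I" and p': "p' \<in> I" and eq: "sg p = sg p'"
    show "p = p'"
    proof (rule ccontr)
      assume ne: "p \<noteq> p'"
      obtain a b a' b' where pp: "p = (a, b)" "p' = (a', b')" by (cases p, cases p')
      have "hd (sg p) (sg p') \<ge> n - 2" using hdge p p' ne pp by simp
      moreover have "hd (sg p) (sg p') = 0" using eq by (simp add: hd_def)
      ultimately show False using n3 by (simp add: n_def)
    qed
  qed
  define Ps where "Ps = sg ` I"
  have cPs: "card Ps = card I" unfolding Ps_def by (rule card_image[OF inj])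
  have Psub: "Ps \<subseteq> {\<pi>. \<pi> permutes {..<n}}" using perm by (auto simp: Ps_def)
  have Pdist: "\<forall>\<pi>\<in>Ps. \<forall>\<sigma>\<in>Ps. \<pi> \<noteq> \<sigma> \<longrightarrow> hd \<pi> \<sigma> \<ge> n - 2"
    using hdge by (fastforce simp: Ps_def)
  define C where "C = {card A | A. A \<subseteq> {\<pi>. \<pi> permutes {..<n}} \<and>
                 (\<forall>\<pi>\<in>A. \<forall>\<sigma>\<in>A. \<pi> \<noteq> \<sigma> \<longrightarrow> hd \<pi> \<sigma> \<ge> n - 2)}"
  have finC: "finite C"
  proof -
    have "C \<subseteq> card ` Pow {\<pi>. \<pi> permutes {..<n}}" by (auto simp: C_def)
    moreover have "finite {\<pi>. \<pi> permutes {..<(n::nat)}}" by (rule finite_permutations) simp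
    ultimately show ?thesis by (meson finite_Pow_iff finite_imageI finite_subset)
  qed
  have "card Ps \<in> C" using Psub Pdist by (auto simp: C_def)
  then have "card Ps \<le> Max C" using finC by simp
  then show ?thesis using cPs by (simp add: M_def C_def n_def)
qed

end

context ffield
begin

lemma card_mult_pre:
  assumes a: "a \<in> F" and P: "P \<subseteq> F"
  shows "card {b \<in> F. a \<otimes> b \<in> P} = card P"
proof -
  have ac: "a \<in> carrier L" "a \<noteq> \<zero>" using a F_carrier by (auto simp: F_def)
  have au: "a \<in> Units L" using ac field_Units by auto
  have "bij_betw (\<lambda>b. a \<otimes> b) {b \<in> F. a \<otimes> b \<in> P} P"
  proof (rule bij_betw_imageI)
    show "inj_on (\<lambda>b. a \<otimes> b) {b \<in> F. a \<otimes> b \<in> P}"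
      using ac F_carrier m_lcancel by (auto simp: inj_on_def)
    show "(\<lambda>b. a \<otimes> b) ` {b \<in> F. a \<otimes> b \<in> P} = P"
    proof
      show "(\<lambda>b. a \<otimes> b) ` {b \<in> F. a \<otimes> b \<in> P} \<subseteq> P" by auto
      show "P \<subseteq> (\<lambda>b. a \<otimes> b) ` {b \<in> F. a \<otimes> b \<in> P}"
      proof
        fix c assume c: "c \<in> P"
        then have cF: "c \<in> F" using P by auto
        have cc: "c \<in> carrier L" "c \<noteq> \<zero>" using cF F_carrier by (auto simp: F_def)
        have aS: "a \<in> S" using a by (simp add: F_def)
        have iS: "inv a \<in> S" using S_inv[OF aS ac(2)] .
        have ic: "inv a \<in> carrier L" using au by simp
        have i0: "inv a \<noteq> \<zero>"
        proof
          assume "inv a = \<zero>" then have "a \<otimes> inv a = \<zero>" using ac by simp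
          moreover have "a \<otimes> inv a = \<one>" using au by simp
          ultimately show False by simp
        qed
        define b where "b = inv a \<otimes> c"
        have bF: "b \<in> F" using iS cF ic cc i0 mult_eq_zero S_mult by (auto simp: b_def F_def)
        have "a \<otimes> b = c" using au ac cc ic by (simp add: b_def m_assoc[symmetric])
        then show "c \<in> (\<lambda>b. a \<otimes> b) ` {b \<in> F. a \<otimes> b \<in> P}" using bF c by force
      qed
    qed
  qed
  then show ?thesis by (rule bij_betw_same_card)
qed

end

theorem corollary7:
  fixes q :: nat
  assumes "primepow q" and "q mod 3 = 1" and "q \<ge> 7"
  shows "(odd q \<longrightarrow> real (M (q - 1) (q - 3)) \<ge> (real q ^ 2 - 1) / 2) \<and>
         (even q \<longrightarrow> real (M (q - 1) (q - 3)) \<ge> (real q - 1) * (real q + 2) / 3)"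
proof -
  show ?thesis
  proof (rule finite_field_exists[OF assms(1)])
  fix L :: "((int list \<times> nat) multiset \<Rightarrow> int) ring" and S
  assume fL: "field L" and sub: "S \<subseteq> carrier L" and fin: "finite S" and cS: "card S = q"
    and z: "\<zero>\<^bsub>L\<^esub> \<in> S"
    and ad: "\<And>x y. x \<in> S \<Longrightarrow> y \<in> S \<Longrightarrow> x \<oplus>\<^bsub>L\<^esub> y \<in> S"
    and mu: "\<And>x y. x \<in> S \<Longrightarrow> y \<in> S \<Longrightarrow> x \<otimes>\<^bsub>L\<^esub> y \<in> S"
    and ng: "\<And>x. x \<in> S \<Longrightarrow> \<ominus>\<^bsub>L\<^esub> x \<in> S"
    and iv: "\<And>x. x \<in> S \<Longrightarrow> x \<noteq> \<zero>\<^bsub>L\<^esub> \<Longrightarrow> inv\<^bsub>L\<^esub> x \<in> S"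
    and two: "odd q \<Longrightarrow> \<one>\<^bsub>L\<^esub> \<oplus>\<^bsub>L\<^esub> \<one>\<^bsub>L\<^esub> \<noteq> \<zero>\<^bsub>L\<^esub>"
  interpret ffield L S
    by (rule ffield.intro[OF fL]) (unfold_locales, use sub fin z ad mu ng iv in auto)
  have cF: "card F = q - 1" using cS z fin by (simp add: F_def card_Diff_singleton)
  define n where "n = q - 1"
  have n6: "n \<ge> 6" using assms(3) by (simp add: n_def)
  have d: "q - 3 = card F - 2" using cF assms(3) by simp
  have FS: "F \<subseteq> S" by (auto simp: F_def)
  have Ffin: "finite F" by (rule F_fin)
  have part1: "real (M (q - 1) (q - 3)) \<ge> (real q ^ 2 - 1) / 2" if oq: "odd q"
  proof -
    obtain P where P: "P \<subseteq> F" "\<forall>x\<in>P. \<ominus>\<^bsub>L\<^esub> x \<notin> P" "card F \<le> 2 * card P"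
      using half_set[OF two[OF oq]] by blast
    define Q where "Q = (SIGMA a:F. {b \<in> F. a \<otimes>\<^bsub>L\<^esub> b \<in> P})"
    define I where "I = F \<times> {\<zero>\<^bsub>L\<^esub>} \<union> Q"
    have IS: "I \<subseteq> F \<times> S" using FS z by (auto simp: I_def Q_def)
    have nb: "\<not> (b \<noteq> \<zero>\<^bsub>L\<^esub> \<and> b' \<noteq> \<zero>\<^bsub>L\<^esub> \<and> a \<noteq> a' \<and> a \<otimes>\<^bsub>L\<^esub> a' = (a \<oplus>\<^bsub>L\<^esub> a') \<otimes>\<^bsub>L\<^esub> (a \<oplus>\<^bsub>L\<^esub> a')
               \<and> a' \<otimes>\<^bsub>L\<^esub> b' = \<ominus>\<^bsub>L\<^esub> (a \<otimes>\<^bsub>L\<^esub> b))"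
      if "(a, b) \<in> I" "(a', b') \<in> I" "(a, b) \<noteq> (a', b')" for a b a' b'
    proof
      assume h: "b \<noteq> \<zero>\<^bsub>L\<^esub> \<and> b' \<noteq> \<zero>\<^bsub>L\<^esub> \<and> a \<noteq> a' \<and> a \<otimes>\<^bsub>L\<^esub> a' = (a \<oplus>\<^bsub>L\<^esub> a') \<otimes>\<^bsub>L\<^esub> (a \<oplus>\<^bsub>L\<^esub> a')
               \<and> a' \<otimes>\<^bsub>L\<^esub> b' = \<ominus>\<^bsub>L\<^esub> (a \<otimes>\<^bsub>L\<^esub> b)"
      then have ab: "a \<otimes>\<^bsub>L\<^esub> b \<in> P" and ab': "a' \<otimes>\<^bsub>L\<^esub> b' \<in> P" using that by (auto simp: I_def Q_def)
      have "\<ominus>\<^bsub>L\<^esub> (a \<otimes>\<^bsub>L\<^esub> b) \<notin> P" using P(2) ab by blast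
      moreover have "\<ominus>\<^bsub>L\<^esub> (a \<otimes>\<^bsub>L\<^esub> b) \<in> P" using h ab' by simp
      ultimately show False by blast
    qed
    have disj: "F \<times> {\<zero>\<^bsub>L\<^esub>} \<inter> Q = {}" by (auto simp: Q_def F_def)
    have finQ: "finite Q" using Ffin by (simp add: Q_def)
    have cQ: "card Q = card F * card P"
      unfolding Q_def using Ffin card_mult_pre[OF _ P(1)] by (simp add: card_SigmaI)
    have cI: "card I = card F + card F * card P"
      unfolding I_def using disj finQ Ffin cQ by (simp add: card_Un_disjoint card_cartesian_product)
    have "card I \<le> M (card F) (card F - 2)"
      using M_ge[OF IS nb] cF n6 by (auto simp: n_def)
    then have MIn: "card F + card F * card P \<le> M (q - 1) (q - 3)" using cI cF d by simp
    then have MI: "real (card F + card F * card P) \<le> real (M (q - 1) (q - 3))" by (simp only: of_nat_le_iff)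
    have "(real q ^ 2 - 1) / 2 = real n + real n * real n / 2"
      using assms(3) by (simp add: n_def of_nat_diff power2_eq_square field_simps)
    also have "\<dots> \<le> real n + real n * real (card P)"
    proof -
      have "real n \<le> 2 * real (card P)" using P(3) cF n_def by linarith
      then have "real n * real n \<le> real n * (2 * real (card P))" by (intro mult_left_mono) auto
      then show ?thesis by simp
    qed
    also have "\<dots> = real (card F + card F * card P)" using cF by (simp add: n_def)
    finally show ?thesis using MI by linarith
  qed
  have part2: "real (M (q - 1) (q - 3)) \<ge> (real q - 1) * (real q + 2) / 3" if eq: "even q"
  proof -
    obtain R where R: "R \<subseteq> F" "\<forall>x\<in>R. \<forall>y\<in>R. x \<noteq> y \<longrightarrow> x \<otimes>\<^bsub>L\<^esub> y \<noteq> (x \<oplus>\<^bsub>L\<^esub> y) \<otimes>\<^bsub>L\<^esub> (x \<oplus>\<^bsub>L\<^esub> y)"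
      "card F \<le> 3 * card R"
      using third_set by blast
    define I where "I = F \<times> {\<zero>\<^bsub>L\<^esub>} \<union> R \<times> F"
    have IS: "I \<subseteq> F \<times> S" using FS z R(1) by (auto simp: I_def)
    have nb: "\<not> (b \<noteq> \<zero>\<^bsub>L\<^esub> \<and> b' \<noteq> \<zero>\<^bsub>L\<^esub> \<and> a \<noteq> a' \<and> a \<otimes>\<^bsub>L\<^esub> a' = (a \<oplus>\<^bsub>L\<^esub> a') \<otimes>\<^bsub>L\<^esub> (a \<oplus>\<^bsub>L\<^esub> a')
               \<and> a' \<otimes>\<^bsub>L\<^esub> b' = \<ominus>\<^bsub>L\<^esub> (a \<otimes>\<^bsub>L\<^esub> b))"
      if "(a, b) \<in> I" "(a', b') \<in> I" "(a, b) \<noteq> (a', b')" for a b a' b'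
    proof
      assume h: "b \<noteq> \<zero>\<^bsub>L\<^esub> \<and> b' \<noteq> \<zero>\<^bsub>L\<^esub> \<and> a \<noteq> a' \<and> a \<otimes>\<^bsub>L\<^esub> a' = (a \<oplus>\<^bsub>L\<^esub> a') \<otimes>\<^bsub>L\<^esub> (a \<oplus>\<^bsub>L\<^esub> a')
               \<and> a' \<otimes>\<^bsub>L\<^esub> b' = \<ominus>\<^bsub>L\<^esub> (a \<otimes>\<^bsub>L\<^esub> b)"
      then have aR: "a \<in> R" and aR': "a' \<in> R" using that by (auto simp: I_def)
      have "a \<otimes>\<^bsub>L\<^esub> a' \<noteq> (a \<oplus>\<^bsub>L\<^esub> a') \<otimes>\<^bsub>L\<^esub> (a \<oplus>\<^bsub>L\<^esub> a')"
        using R(2) aR aR' h by blast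
      then show False using h by blast
    qed
    have disj: "F \<times> {\<zero>\<^bsub>L\<^esub>} \<inter> R \<times> F = {}" by (auto simp: F_def)
    have finR: "finite R" using R(1) Ffin finite_subset by blast
    have cI: "card I = card F + card R * card F"
      unfolding I_def using disj finR Ffin by (simp add: card_Un_disjoint card_cartesian_product)
    have "card I \<le> M (card F) (card F - 2)"
      using M_ge[OF IS nb] cF n6 by (auto simp: n_def)
    then have MIn: "card F + card R * card F \<le> M (q - 1) (q - 3)" using cI cF d by simp
    then have MI: "real (card F + card R * card F) \<le> real (M (q - 1) (q - 3))" by (simp only: of_nat_le_iff)
    have "(real q - 1) * (real q + 2) / 3 = real n + real n * real n / 3"
      using assms(3) by (simp add: n_def of_nat_diff field_simps)
    also have "\<dots> \<le> real n + real (card R) * real n"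
    proof -
      have "real n \<le> 3 * real (card R)" using R(3) cF n_def by linarith
      then have "real n * real n \<le> (3 * real (card R)) * real n" by (intro mult_right_mono) auto
      then show ?thesis by simp
    qed
    also have "\<dots> = real (card F + card R * card F)" using cF by (simp add: n_def)
    finally show ?thesis using MI by linarith
  qed
  show ?thesis using part1 part2 by blast
  qed
qed

end
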